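(* Let $n\ge2$ and consider the parallel network with unit demand and latencies $\ell_i(x_i)=x_i$ for $i=1,\dots,n-1$ and constant latency $\ell_n(x_n)=\frac{1}{2(n-1)}$. Then for every $c\in\mathbb{R}_+\cup\{\infty\}$ and every $t\in\mathcal{T}(c)$, the induced flow is $x(t)=\left(\frac{1}{2(n-1)},\dots,\frac{1}{2(n-1)},\frac12\right)=x(0)$, while the optimal flow is $x^*=\left(\frac{1}{4(n-1)},\dots,\frac{1}{4(n-1)},\frac34\right)$. Consequently every price cap is optimal and $$\min_{c}\ \frac{C(x(c))}{C(x^* )}=\frac87 .$$
   Context: Flows $x\in\mathbb{R}^n_+$ with $\sum_ix_i=1$; $C(x)=\sum_i\ell_i(x_i)x_i$; $x^*$ minimizes $C$. For tolls $t\in\mathbb{R}^n_+$, $x(t)$ is the unique Wardrop equilibrium for $t$ (for all $i,j$ with $x_i>0$: $\ell_i(x_i)+t_i\le\ell_j(x_j)+t_j$); $x(0)$ is the untolled one. Profit $\Pi_i(t)=t_ix_i(t)$. For $c\in\mathbb{R}_+$, $\mathcal{T}(c)$ is the set of toll vectors with $0\le t_i\le c$ such that for every $i$ and every $t'_i\in[0,c]$, $\Pi_i(t_i,t_{-i})\ge\Pi_i(t'_i,t_{-i})$ (flow recomputed); $\mathcal{T}(\infty)$ is the same without upper bound. $x(c)$ denotes the flow induced by the $c$-capped equilibrium. *)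

theory Defs
  imports "HOL-Analysis.Analysis" "HOL-Library.Extended_Real"
begin

text \<open>Parallel network with links indexed 0,...,n-1; flows and tolls are
  functions nat => real that vanish outside {..<n}.  lat i y is the latency
  of link i at flow y.\<close>

definition feasible :: "nat \<Rightarrow> (nat \<Rightarrow> real) \<Rightarrow> bool" where
  "feasible n x \<longleftrightarrow> (\<forall>i<n. 0 \<le> x i) \<and> (\<forall>i\<ge>n. x i = 0) \<and> (\<Sum>i<n. x i) = 1"

definition cost :: "nat \<Rightarrow> (nat \<Rightarrow> real \<Rightarrow> real) \<Rightarrow> (nat \<Rightarrow> real) \<Rightarrow> real" where
  "cost n lat x = (\<Sum>i<n. lat i (x i) * x i)"

definition optimal :: "nat \<Rightarrow> (nat \<Rightarrow> real \<Rightarrow> real) \<Rightarrow> (nat \<Rightarrow> real) \<Rightarrow> bool" where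
  "optimal n lat x \<longleftrightarrow> feasible n x \<and> (\<forall>y. feasible n y \<longrightarrow> cost n lat x \<le> cost n lat y)"

definition wardrop :: "nat \<Rightarrow> (nat \<Rightarrow> real \<Rightarrow> real) \<Rightarrow> (nat \<Rightarrow> real) \<Rightarrow> (nat \<Rightarrow> real) \<Rightarrow> bool" where
  "wardrop n lat t x \<longleftrightarrow> feasible n x \<and>
     (\<forall>i<n. \<forall>j<n. 0 < x i \<longrightarrow> lat i (x i) + t i \<le> lat j (x j) + t j)"

text \<open>x(t): the (unique) Wardrop equilibrium under tolls t.\<close>
definition eqflow :: "nat \<Rightarrow> (nat \<Rightarrow> real \<Rightarrow> real) \<Rightarrow> (nat \<Rightarrow> real) \<Rightarrow> (nat \<Rightarrow> real)" where
  "eqflow n lat t = (THE x. wardrop n lat t x)"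

definition profit :: "nat \<Rightarrow> (nat \<Rightarrow> real \<Rightarrow> real) \<Rightarrow> nat \<Rightarrow> (nat \<Rightarrow> real) \<Rightarrow> real" where
  "profit n lat i t = t i * eqflow n lat t i"

text \<open>T(c) for c in [0,\<infinity>] (c = \<infinity> means no cap).\<close>
definition toll_eq :: "nat \<Rightarrow> (nat \<Rightarrow> real \<Rightarrow> real) \<Rightarrow> ereal \<Rightarrow> (nat \<Rightarrow> real) set" where
  "toll_eq n lat c = {t. (\<forall>i<n. 0 \<le> t i \<and> ereal (t i) \<le> c) \<and> (\<forall>i\<ge>n. t i = 0) \<and>
     (\<forall>i<n. \<forall>t'. 0 \<le> t' \<and> ereal t' \<le> c \<longrightarrow> profit n lat i t \<ge> profit n lat i (t(i := t')))}"

definition ex_lat :: "nat \<Rightarrow> nat \<Rightarrow> real \<Rightarrow> real" where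
  "ex_lat n i y = (if i < n - 1 then y else 1 / (2 * (real n - 1)))"

end

theory Submission
  imports Defs
begin


lemma lat_Suc[simp]: "ex_lat (Suc m) i y = (if i < m then y else 1 / (2 * real m))"
  by (simp add: ex_lat_def)

lemma vi:
  assumes w: "wardrop (Suc m) (ex_lat (Suc m)) s x" and f: "feasible (Suc m) y"
  shows "(\<Sum>i<Suc m. (ex_lat (Suc m) i (x i) + s i) * x i)
       \<le> (\<Sum>i<Suc m. (ex_lat (Suc m) i (x i) + s i) * y i)"
proof -
  define c where "c i = ex_lat (Suc m) i (x i) + s i" for i
  have fx: "feasible (Suc m) x" using w by (simp add: wardrop_def)
  have sx: "(\<Sum>i<Suc m. x i) = 1" and sy: "(\<Sum>i<Suc m. y i) = 1"
    using fx f by (auto simp: feasible_def)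
  have eq: "(\<Sum>j<Suc m. c j * y j) - (\<Sum>i<Suc m. c i * x i)
      = (\<Sum>i<Suc m. x i * (\<Sum>j<Suc m. y j * (c j - c i)))"
  proof -
    have "(\<Sum>i<Suc m. x i * (\<Sum>j<Suc m. y j * (c j - c i)))
        = (\<Sum>i<Suc m. x i * (\<Sum>j<Suc m. c j * y j) - c i * x i * (\<Sum>j<Suc m. y j))"
      by (rule sum.cong) (auto simp: sum_subtractf sum_distrib_left right_diff_distrib algebra_simps)
    also have "\<dots> = (\<Sum>j<Suc m. c j * y j) - (\<Sum>i<Suc m. c i * x i)"
      using sx sy by (simp add: sum_subtractf sum_distrib_right[symmetric])
    finally show ?thesis by simp
  qed
  have "(\<Sum>i<Suc m. x i * (\<Sum>j<Suc m. y j * (c j - c i))) \<ge> 0"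
  proof (rule sum_nonneg)
    fix i assume i: "i \<in> {..<Suc m}"
    show "0 \<le> x i * (\<Sum>j<Suc m. y j * (c j - c i))"
    proof (cases "x i = 0")
      case False
      then have "x i > 0" using fx i by (auto simp: feasible_def less_le)
      then have "\<forall>j<Suc m. c i \<le> c j" using w i by (auto simp: wardrop_def c_def)
      then have "(\<Sum>j<Suc m. y j * (c j - c i)) \<ge> 0"
        using f unfolding feasible_def by (intro sum_nonneg mult_nonneg_nonneg) auto
      then show ?thesis using \<open>x i > 0\<close> by simp
    qed simp
  qed
  then show ?thesis using eq unfolding c_def by simp
qed

lemma wardrop_unique:
  assumes wx: "wardrop (Suc m) (ex_lat (Suc m)) s x" and wy: "wardrop (Suc m) (ex_lat (Suc m)) s y"
  shows "x = y"
proof -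
  have fx: "feasible (Suc m) x" and fy: "feasible (Suc m) y" using wx wy by (auto simp: wardrop_def)
  note v1 = vi[OF wx fy] and v2 = vi[OF wy fx]
  have "(\<Sum>i<Suc m. (ex_lat (Suc m) i (x i) - ex_lat (Suc m) i (y i)) * (x i - y i))
    = ((\<Sum>i<Suc m. (ex_lat (Suc m) i (x i) + s i) * x i) - (\<Sum>i<Suc m. (ex_lat (Suc m) i (x i) + s i) * y i))
     + ((\<Sum>i<Suc m. (ex_lat (Suc m) i (y i) + s i) * y i) - (\<Sum>i<Suc m. (ex_lat (Suc m) i (y i) + s i) * x i))"
    unfolding sum_subtractf[symmetric] sum.distrib[symmetric] by (rule sum.cong) (simp_all add: algebra_simps)
  also have "\<dots> \<le> 0" using v1 v2 by linarith
  finally have "(\<Sum>i<Suc m. (ex_lat (Suc m) i (x i) - ex_lat (Suc m) i (y i)) * (x i - y i)) \<le> 0" .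
  also have "(\<Sum>i<Suc m. (ex_lat (Suc m) i (x i) - ex_lat (Suc m) i (y i)) * (x i - y i))
     = (\<Sum>i<m. (x i - y i)^2)" by (simp add: power2_eq_square)
  finally have "(\<Sum>i<m. (x i - y i)^2) \<le> 0" .
  then have "(\<Sum>i<m. (x i - y i)^2) = 0" by (meson antisym sum_nonneg zero_le_power2)
  then have e: "\<forall>i<m. x i = y i" by (simp add: sum_nonneg_eq_0_iff)
  have "(\<Sum>i<m. x i) = (\<Sum>i<m. y i)" using e by simp
  moreover have "(\<Sum>i<Suc m. x i) = 1" "(\<Sum>i<Suc m. y i) = 1" using fx fy by (auto simp: feasible_def)
  ultimately have "x m = y m" by simp
  then show ?thesis using e fx fy
    by (auto simp: feasible_def intro!: ext) (metis less_antisym not_less)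
qed



lemma wardrop_exists:
  assumes m: "m \<ge> 1"
  shows "\<exists>x. wardrop (Suc m) (ex_lat (Suc m)) s x"
proof -
  define a where "a = 1 / (2 * real m)"
  define F where "F L = (\<Sum>i<m. max 0 (L - s i))" for L
  define b where "b = a + s m"
  show ?thesis
  proof (cases "F b \<le> 1")
    case True
    define x where "x i = (if i < m then max 0 (b - s i) else if i = m then 1 - F b else 0)" for i
    have "wardrop (Suc m) (ex_lat (Suc m)) s x"
      unfolding wardrop_def feasible_def
    proof (intro conjI allI impI)
      show "0 \<le> x i" if "i < Suc m" for i using True that by (auto simp: x_def)
      show "x i = 0" if "i \<ge> Suc m" for i using that by (auto simp: x_def)
      show "(\<Sum>i<Suc m. x i) = 1" by (simp add: x_def F_def)
      fix i j assume i: "i < Suc m" and j: "j < Suc m" and p: "0 < x i"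
      have ci: "ex_lat (Suc m) i (x i) + s i = b"
        using i p by (auto simp: x_def b_def a_def less_Suc_eq split: if_splits)
      have "ex_lat (Suc m) j (x j) + s j \<ge> b"
        using j by (auto simp: x_def b_def a_def less_Suc_eq)
      then show "ex_lat (Suc m) i (x i) + s i \<le> ex_lat (Suc m) j (x j) + s j" using ci by simp
    qed
    then show ?thesis by blast
  next
    case False
    define L0 where "L0 = min b (- (\<Sum>i<m. \<bar>s i\<bar>))"
    have "\<forall>i<m. L0 \<le> s i"
    proof (intro allI impI)
      fix i assume "i < m"
      then have "\<bar>s i\<bar> \<le> (\<Sum>i<m. \<bar>s i\<bar>)"
        by (intro member_le_sum) auto
      then show "L0 \<le> s i" unfolding L0_def by linarith
    qed
    then have "F L0 = 0" unfolding F_def by (intro sum.neutral) auto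
    have cont: "\<forall>x. L0 \<le> x \<and> x \<le> b \<longrightarrow> isCont F x"
      unfolding F_def by (intro allI impI continuous_intros)
    have "L0 \<le> b" unfolding L0_def by simp
    then obtain L where L: "L0 \<le> L" "L \<le> b" "F L = 1"
      using IVT[of F L0 1 b] False cont \<open>F L0 = 0\<close> by auto
    define x where "x i = (if i < m then max 0 (L - s i) else 0)" for i
    have "wardrop (Suc m) (ex_lat (Suc m)) s x"
      unfolding wardrop_def feasible_def
    proof (intro conjI allI impI)
      show "0 \<le> x i" if "i < Suc m" for i using that by (auto simp: x_def)
      show "x i = 0" if "i \<ge> Suc m" for i using that by (auto simp: x_def)
      show "(\<Sum>i<Suc m. x i) = 1" using L by (simp add: x_def F_def)
      fix i j assume i: "i < Suc m" and j: "j < Suc m" and p: "0 < x i"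
      have ci: "ex_lat (Suc m) i (x i) + s i = L"
        using i p by (auto simp: x_def split: if_splits)
      have "ex_lat (Suc m) j (x j) + s j \<ge> L"
        using j L by (auto simp: x_def b_def a_def less_Suc_eq)
      then show "ex_lat (Suc m) i (x i) + s i \<le> ex_lat (Suc m) j (x j) + s j" using ci by simp
    qed
    then show ?thesis by blast
  qed
qed

lemma eqflow_wardrop:
  assumes "m \<ge> 1"
  shows "wardrop (Suc m) (ex_lat (Suc m)) s (eqflow (Suc m) (ex_lat (Suc m)) s)"
proof -
  obtain x where "wardrop (Suc m) (ex_lat (Suc m)) s x" using wardrop_exists[OF assms] by blast
  then have "\<exists>!x. wardrop (Suc m) (ex_lat (Suc m)) s x" using wardrop_unique by blast
  then show ?thesis unfolding eqflow_def by (rule theI')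
qed

lemma eqflow_eq:
  assumes "wardrop (Suc m) (ex_lat (Suc m)) s x"
  shows "eqflow (Suc m) (ex_lat (Suc m)) s = x"
  unfolding eqflow_def using assms wardrop_unique by blast

lemma all_used:
  assumes nn: "\<forall>j<m. 0 \<le> 1 / (2 * real m) + s m - s j"
    and sm: "(\<Sum>k<m. 1 / (2 * real m) + s m - s k) \<le> 1"
  shows "eqflow (Suc m) (ex_lat (Suc m)) s =
     (\<lambda>j. if j < m then 1 / (2 * real m) + s m - s j
          else if j = m then 1 - (\<Sum>k<m. 1 / (2 * real m) + s m - s k) else 0)"
  apply (rule eqflow_eq)
  unfolding wardrop_def feasible_def using nn sm
  apply (auto simp: less_Suc_eq)
  done

lemma const_toll:
  assumes m: "m \<ge> 1" and c: "\<forall>i<Suc m. s i = \<tau>"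
  shows "eqflow (Suc m) (ex_lat (Suc m)) s =
     (\<lambda>i. if i < m then 1 / (2 * real m) else if i = m then 1/2 else 0)"
proof -
  have e: "(\<Sum>k<m. 1 / (2 * real m) + s m - s k) = 1/2"
    using c m by simp
  show ?thesis using all_used[of m s] c e by (auto simp: less_Suc_eq intro!: ext)
qed



lemma ereal_up:
  assumes "ereal u < c" "0 < d"
  shows "\<exists>\<eta>>0. \<eta> \<le> d \<and> ereal (u + \<eta>) \<le> c"
proof (cases c)
  case (real r)
  then show ?thesis using assms by (intro exI[of _ "min d (r - u)"]) auto
next
  case PInf
  then show ?thesis using assms by auto
next
  case MInf
  then show ?thesis using assms by auto
qed

lemma pig:
  assumes "m \<ge> 1" "(\<Sum>i<m. y i) = (1::real)"
  shows "\<exists>j<m. y j \<ge> 1 / real m"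
proof (rule ccontr)
  assume "\<not> ?thesis"
  then have "\<forall>j\<in>{..<m}. y j < 1 / real m" by auto
  then have "(\<Sum>i<m. y i) < (\<Sum>i<m. 1 / real m)"
    using assms(1) by (intro sum_strict_mono) (auto simp: set_eq_iff, metis Suc_le_eq)
  then show False using assms by simp
qed

lemma sum_upd:
  fixes i m :: nat
  assumes "i < m"
  shows "(\<Sum>k<m. f ((t(i:=u)) k)) = (\<Sum>k<m. f (t k)) - f (t i) + (f u :: real)"
proof -
  have "(\<Sum>k<m. f ((t(i:=u)) k)) = f u + (\<Sum>k\<in>{..<m}-{i}. f ((t(i:=u)) k))"
    using assms by (subst sum.remove[of "{..<m}" i]) auto
  also have "(\<Sum>k\<in>{..<m}-{i}. f ((t(i:=u)) k)) = (\<Sum>k\<in>{..<m}-{i}. f (t k))"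
    by (rule sum.cong) auto
  also have "\<dots> = (\<Sum>k<m. f (t k)) - f (t i)"
    using assms by (subst sum.remove[of "{..<m}" i]) auto
  finally show ?thesis by simp
qed

lemma fin_arith:
  fixes P Q R xm :: real
  assumes "xm = 1/2 - P + Q" "xm > 0" "Q \<le> 1/4 + P/2" "Q = 1/4 + P/2 \<or> Q = R"
    "Q \<le> R" "P \<le> R" "P < R \<longrightarrow> xm \<le> P" "P > 0 \<longrightarrow> xm \<ge> P" "0 \<le> P"
  shows "P = Q"
proof (cases "P < R")
  case True
  then have "xm \<le> P" using assms by simp
  then have "P > 0" using assms by linarith
  then have "xm \<ge> P" using assms by simp
  show ?thesis using assms(4)
  proof
    assume "Q = R" then show ?thesis using assms \<open>xm \<le> P\<close> \<open>xm \<ge> P\<close> True by linarith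
  qed (use assms \<open>xm \<le> P\<close> \<open>xm \<ge> P\<close> in linarith)
next
  case False
  then have "P = R" using assms by linarith
  show ?thesis using assms(4)
  proof
    assume q: "Q = 1/4 + P/2"
    then have "P > 0" using assms \<open>P = R\<close> by linarith
    then show ?thesis using assms q \<open>P = R\<close> by linarith
  qed (use \<open>P = R\<close> in simp)
qed



lemma eq_tolls:
  assumes m: "m \<ge> 1" and c0: "c \<ge> 0" and tT: "t \<in> toll_eq (Suc m) (ex_lat (Suc m)) c"
  shows "\<forall>i<Suc m. t i = t m"
proof -
  define X where "X s = eqflow (Suc m) (ex_lat (Suc m)) s" for s
  define a where "a = 1 / (2 * real m)"
  define M where "M = real m"
  have M0: "M > 0" using m by (simp add: M_def)
  have a0: "a > 0" using m by (simp add: a_def)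
  have Ma: "M * a = 1/2" using m by (simp add: a_def M_def)
  have W: "wardrop (Suc m) (ex_lat (Suc m)) s (X s)" for s
    unfolding X_def by (rule eqflow_wardrop[OF m])
  have Xnn: "0 \<le> X s i" if "i < Suc m" for s i using W[of s] that by (auto simp: wardrop_def feasible_def)
  have Xsum: "(\<Sum>i<m. X s i) + X s m = 1" for s using W[of s] by (auto simp: wardrop_def feasible_def)
  have Xw: "ex_lat (Suc m) i (X s i) + s i \<le> ex_lat (Suc m) j (X s j) + s j"
    if "i < Suc m" "j < Suc m" "0 < X s i" for s i j
    using W[of s] that unfolding wardrop_def by blast
  have tnn: "0 \<le> t i" "ereal (t i) \<le> c" if "i < Suc m" for i
    using tT that by (auto simp: toll_eq_def)
  have br: "u * X (t(i:=u)) i \<le> t i * X t i" if "i < Suc m" "0 \<le> u" "ereal u \<le> c" for i u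
    using tT that by (auto simp: toll_eq_def profit_def X_def)
  define x where "x = X t"
  show ?thesis
  proof (cases "c = 0")
    case True
    then have "t i = 0" if "i < Suc m" for i using tnn[OF that] by (simp add: order_antisym zero_ereal_def)
    then show ?thesis by simp
  next
    case False
    then have "c > 0" using c0 by simp
    then obtain \<epsilon> where e: "\<epsilon> > 0" "\<epsilon> \<le> a/2" "ereal \<epsilon> \<le> c"
      using ereal_up[of 0 c "a/2"] a0 by (auto simp: zero_ereal_def)
    have xm: "x m > 0"
    proof (rule ccontr)
      assume "\<not> x m > 0"
      then have x0: "x m = 0" using Xnn[of m t] by (simp add: x_def)
      define s where "s = t(m := \<epsilon>)"
      have "X s m > 0"
      proof (rule ccontr)
        assume "\<not> X s m > 0"
        then have "X s m = 0" using Xnn[of m s] by simp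
        then have "(\<Sum>i<m. X s i) = 1" using Xsum[of s] by simp
        then obtain j where j: "j < m" "X s j \<ge> 1 / real m" using pig[OF m] by blast
        have "1 / real m > 0" using m by simp
        then have "X s j > 0" using j by linarith
        then have "ex_lat (Suc m) j (X s j) + s j \<le> ex_lat (Suc m) m (X s m) + s m"
          using Xw[of j m s] j by simp
        then have "X s j + t j \<le> a + \<epsilon>" using j by (simp add: s_def a_def)
        moreover have "t j \<ge> 0" using tnn j by simp
        ultimately have "1 / M \<le> 3/2 * a" using j e by (simp add: M_def)
        moreover have "1 / M > 3/2 * a" using M0 by (simp add: a_def M_def field_simps)
        ultimately show False by linarith
      qed
      then have "\<epsilon> * X s m > 0" using e by simp
      moreover have "\<epsilon> * X s m \<le> t m * x m" using br[of m \<epsilon>] e by (simp add: s_def x_def)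
      ultimately show False using x0 by simp
    qed
    have xi: "x i > 0" if i: "i < m" for i
    proof (rule ccontr)
      assume "\<not> x i > 0"
      then have x0: "x i = 0" using Xnn[of i t] i by (simp add: x_def)
      have "ex_lat (Suc m) m (x m) + t m \<le> ex_lat (Suc m) i (x i) + t i"
        using Xw[of m i t] xm i by (simp add: x_def)
      then have ti: "a + t m \<le> t i" using i x0 by (simp add: a_def)
      define s where "s = t(i := \<epsilon>)"
      have "X s i > 0"
      proof (rule ccontr)
        assume "\<not> X s i > 0"
        then have y0: "X s i = 0" using Xnn[of i s] i by simp
        have "wardrop (Suc m) (ex_lat (Suc m)) t (X s)"
          unfolding wardrop_def
        proof (intro conjI allI impI)
          show "feasible (Suc m) (X s)" using W[of s] by (simp add: wardrop_def)
          fix j k assume jk: "j < Suc m" "k < Suc m" "0 < X s j"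
          then have "j \<noteq> i" using y0 by auto
          have "s k \<le> t k"
          proof (cases "k = i")
            case True then show ?thesis using ti tnn[of m] e by (simp add: s_def)
          qed (simp add: s_def)
          then show "ex_lat (Suc m) j (X s j) + t j \<le> ex_lat (Suc m) k (X s k) + t k"
            using Xw[of j k s] jk \<open>j \<noteq> i\<close> by (simp add: s_def)
        qed
        then have "X s = x" using W[of t] wardrop_unique unfolding x_def by blast
        then have "X s m > 0" using xm by simp
        then have "ex_lat (Suc m) m (X s m) + s m \<le> ex_lat (Suc m) i (X s i) + s i"
          using Xw[of m i s] i by simp
        then have "a + t m \<le> \<epsilon>" using i y0 by (simp add: s_def a_def)
        then show False using tnn[of m] e a0 by simp
      qed
      then have "\<epsilon> * X s i > 0" using e by simp
      moreover have "\<epsilon> * X s i \<le> t i * x i" using br[of i \<epsilon>] e i by (simp add: s_def x_def)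
      ultimately show False using x0 by simp
    qed
    define L where "L = a + t m"
    have L0: "L > 0" using a0 tnn[of m] by (simp add: L_def)
    have eqL: "x i = L - t i" if i: "i < m" for i
    proof -
      have "ex_lat (Suc m) m (x m) + t m \<le> ex_lat (Suc m) i (x i) + t i"
        using Xw[of m i t] xm i by (simp add: x_def)
      moreover have "ex_lat (Suc m) i (x i) + t i \<le> ex_lat (Suc m) m (x m) + t m"
        using Xw[of i m t] xi[OF i] i by (simp add: x_def)
      ultimately show ?thesis using i by (simp add: L_def a_def)
    qed
    have xm_eq: "x m = 1 - (\<Sum>i<m. L - t i)"
      using Xsum[of t] eqL by (simp add: x_def)
    have lin_dev: "u * (L - u) \<le> t i * (L - t i)"
      if i: "i < m" and u: "0 \<le> u" "ereal u \<le> c" "u \<le> L" "t i - u \<le> x m" for i u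
    proof -
      define s where "s = t(i := u)"
      have sm: "s m = t m" using i by (simp add: s_def)
      have nn: "\<forall>j<m. 0 \<le> 1 / (2 * real m) + s m - s j"
      proof (intro allI impI)
        fix j assume j: "j < m"
        show "0 \<le> 1 / (2 * real m) + s m - s j"
        proof (cases "j = i")
          case True then show ?thesis using u sm by (simp add: s_def L_def a_def)
        next
          case False then show ?thesis using eqL[OF j] Xnn[of j t] j sm
            by (simp add: s_def L_def a_def x_def)
        qed
      qed
      have ssum: "(\<Sum>k<m. 1 / (2 * real m) + s m - s k) = (\<Sum>k<m. L - t k) + t i - u"
        using sum_upd[OF i, of "\<lambda>v. L - v" t u] sm by (simp add: s_def L_def a_def)
      then have sle: "(\<Sum>k<m. 1 / (2 * real m) + s m - s k) \<le> 1" using xm_eq u by simp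
      have "X s i = 1 / (2 * real m) + s m - s i"
        using all_used[OF nn sle] i by (simp add: X_def)
      then have "X s i = L - u" using sm by (simp add: s_def L_def a_def)
      then show ?thesis using br[of i u] i u eqL[OF i] by (simp add: s_def x_def)
    qed
    have lin: "t i \<le> L/2 \<and> (t i = L/2 \<or> ereal (t i) = c)" if i: "i < m" for i
    proof
      show le: "t i \<le> L/2"
      proof (rule ccontr)
        assume "\<not> t i \<le> L/2"
        then have g: "t i > L/2" by simp
        define \<eta> where "\<eta> = min (x m) (min (t i) ((2 * t i - L)/2))"
        have \<eta>0: "\<eta> > 0" using xm g L0 by (simp add: \<eta>_def)
        have "ereal (t i - \<eta>) \<le> ereal (t i)" using \<eta>0 by simp
        then have uc: "ereal (t i - \<eta>) \<le> c" using tnn[of i] i by (meson order_trans less_SucI)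
        have h1: "0 \<le> t i - \<eta>" "t i - \<eta> \<le> L" "t i - (t i - \<eta>) \<le> x m"
        proof -
          have "\<eta> \<le> t i" "\<eta> \<le> x m" unfolding \<eta>_def by linarith+
          then show "0 \<le> t i - \<eta>" "t i - \<eta> \<le> L" "t i - (t i - \<eta>) \<le> x m"
            using \<eta>0 eqL[OF i] xi[OF i] by auto
        qed
        have "(t i - \<eta>) * (L - (t i - \<eta>)) \<le> t i * (L - t i)"
          by (rule lin_dev[OF i h1(1) uc h1(2) h1(3)])
        moreover have "\<eta> \<le> (2 * t i - L) / 2" unfolding \<eta>_def by linarith
        then have "\<eta> * (2 * t i - L - \<eta>) > 0" using \<eta>0 g
          by (intro mult_pos_pos) auto
        ultimately show False by (simp add: algebra_simps)
      qed
      show "t i = L/2 \<or> ereal (t i) = c"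
      proof (rule ccontr)
        assume "\<not> ?thesis"
        then have g: "t i < L/2" "ereal (t i) < c" using le tnn[of i] i by auto
        obtain \<eta> where \<eta>: "\<eta> > 0" "\<eta> \<le> min (x i) ((L - 2 * t i)/2)" "ereal (t i + \<eta>) \<le> c"
          using ereal_up[OF g(2), of "min (x i) ((L - 2 * t i)/2)"] xi[OF i] g(1) by auto
        have "(t i + \<eta>) * (L - (t i + \<eta>)) \<le> t i * (L - t i)"
          using lin_dev[OF i, of "t i + \<eta>"] \<eta> eqL[OF i] xm tnn[of i] i by simp
        moreover have "\<eta> * (L - 2 * t i - \<eta>) > 0" using \<eta> g
          by (intro mult_pos_pos) auto
        ultimately show False by (simp add: algebra_simps)
      qed
    qed
    define \<tau> where "\<tau> = t 0"
    have teq: "t i = \<tau>" if i: "i < m" for i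
    proof -
      have z: "0 < m" using m by simp
      note A = lin[OF i] and B = lin[OF z]
      have ci: "ereal (t i) \<le> c" and c0': "ereal (t 0) \<le> c" using tnn i by auto
      show ?thesis unfolding \<tau>_def
        using A B ci c0' by (smt (verit) ereal_less_eq(3))
    qed
    have xeq: "x i = L - \<tau>" if "i < m" for i using eqL[OF that] teq[OF that] by simp
    have xm2: "x m = 1 - M * (L - \<tau>)" using xm_eq teq by (simp add: M_def)
    have linT: "\<tau> \<le> L/2 \<and> (\<tau> = L/2 \<or> ereal \<tau> = c)" using lin[of 0] m by (simp add: \<tau>_def)
    have con_dev: "u * (x m - M * (u - t m)) \<le> t m * x m"
      if u: "0 \<le> u" "ereal u \<le> c" "0 \<le> a + u - \<tau>" "M * (a + u - \<tau>) \<le> 1" for u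
    proof -
      define s where "s = t(m := u)"
      have sj: "s j = \<tau>" if "j < m" for j using teq[OF that] that by (simp add: s_def)
      have nn: "\<forall>j<m. 0 \<le> 1 / (2 * real m) + s m - s j"
        using u sj by (simp add: s_def a_def)
      have ssum: "(\<Sum>k<m. 1 / (2 * real m) + s m - s k) = M * (a + u - \<tau>)"
        using sj by (simp add: s_def a_def M_def)
      then have sle: "(\<Sum>k<m. 1 / (2 * real m) + s m - s k) \<le> 1" using u by simp
      have "X s m = 1 - (\<Sum>k<m. 1 / (2 * real m) + s m - s k)"
        using all_used[OF nn sle] by (simp add: X_def)
      then have "X s m = x m - M * (u - t m)" using ssum xm2 by (simp add: L_def algebra_simps)
      then show ?thesis using br[of m u] u by (simp add: s_def x_def)
    qed
    have c1: "x m \<le> M * t m" if lt: "ereal (t m) < c"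
    proof (rule ccontr)
      assume "\<not> ?thesis"
      then have g: "x m > M * t m" by simp
      obtain \<eta> where \<eta>: "\<eta> > 0" "\<eta> \<le> (x m - M * t m) / (2 * M)" "ereal (t m + \<eta>) \<le> c"
        using ereal_up[OF lt, of "(x m - M * t m) / (2 * M)"] g M0 by auto
      have M\<eta>: "M * \<eta> \<le> (x m - M * t m) / 2" using \<eta>(2) M0 by (simp add: field_simps)
      have "(t m + \<eta>) * (x m - M * (t m + \<eta> - t m)) \<le> t m * x m"
      proof (rule con_dev)
        show "0 \<le> t m + \<eta>" using tnn[of m] \<eta> by simp
        show "ereal (t m + \<eta>) \<le> c" by fact
        show "0 \<le> a + (t m + \<eta>) - \<tau>" using xeq[of 0] xi[of 0] m \<eta> by (simp add: L_def)
        have "M * t m \<ge> 0" "M * \<eta> \<ge> 0" using M0 tnn[of m] \<eta> by simp_all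
        then show "M * (a + (t m + \<eta>) - \<tau>) \<le> 1" using xm2 M\<eta> g
          by (simp add: L_def algebra_simps)
      qed
      moreover have "\<eta> * (x m - M * t m - M * \<eta>) > 0" using \<eta> M\<eta> g
        by (intro mult_pos_pos) auto
      ultimately show False by (simp add: algebra_simps)
    qed
    have c2: "x m \<ge> M * t m" if gt: "t m > 0"
    proof (rule ccontr)
      assume "\<not> ?thesis"
      then have g: "x m < M * t m" by simp
      define \<eta> where "\<eta> = min (t m) (min (x 0) ((M * t m - x m) / (2 * M)))"
      have x00: "x 0 > 0" using xi[of 0] m by simp
      have \<eta>0: "\<eta> > 0" using gt x00 g M0 by (simp add: \<eta>_def)
      have M\<eta>: "M * \<eta> \<le> (M * t m - x m) / 2"
      proof -
        have "\<eta> \<le> (M * t m - x m) / (2 * M)" by (simp add: \<eta>_def)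
        then show ?thesis using M0 by (simp add: field_simps)
      qed
      have "ereal (t m - \<eta>) \<le> ereal (t m)" using \<eta>0 by simp
      then have uc: "ereal (t m - \<eta>) \<le> c" using tnn[of m] by (meson order_trans lessI)
      have "(t m - \<eta>) * (x m - M * (t m - \<eta> - t m)) \<le> t m * x m"
      proof (rule con_dev)
        show "0 \<le> t m - \<eta>" by (simp add: \<eta>_def)
        show "ereal (t m - \<eta>) \<le> c" by fact
        show "0 \<le> a + (t m - \<eta>) - \<tau>" using xeq[of 0] m by (simp add: L_def \<eta>_def)
        have "M * \<eta> \<ge> 0" using M0 \<eta>0 by simp
        then show "M * (a + (t m - \<eta>) - \<tau>) \<le> 1" using xm2 xm
          by (simp add: L_def algebra_simps)
      qed
      moreover have "\<eta> * (M * t m - x m - M * \<eta>) > 0" using \<eta>0 M\<eta> g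
        by (intro mult_pos_pos) auto
      ultimately show False by (simp add: algebra_simps)
    qed
    define P where "P = M * t m"
    define Q where "Q = M * \<tau>"
    have xmPQ: "x m = 1/2 - P + Q" using xm2 Ma by (simp add: P_def Q_def L_def algebra_simps)
    have MLh: "M * (L/2) = (M*a)/2 + P/2" by (simp add: L_def P_def algebra_simps)
    have "M*\<tau> \<le> M*(L/2)" using linT M0 by (intro mult_left_mono) auto
    then have QL: "Q \<le> 1/4 + P/2" using MLh Ma by (simp add: Q_def)
    have QLe: "Q = 1/4 + P/2" if "\<tau> = L/2"
    proof -
      have "Q = M * (L/2)" using that by (simp add: Q_def)
      then show ?thesis using MLh Ma by linarith
    qed
    have P0: "0 \<le> P" using M0 tnn[of m] by (simp add: P_def)
    have c2': "P > 0 \<longrightarrow> x m \<ge> P"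
    proof
      assume "P > 0" then have "t m > 0" using M0 by (simp add: P_def zero_less_mult_iff)
      then show "x m \<ge> P" using c2 by (simp add: P_def)
    qed
    obtain R where R: "Q \<le> R" "P \<le> R" "Q = 1/4 + P/2 \<or> Q = R" "P < R \<longrightarrow> x m \<le> P"
    proof (cases c)
      case (real r)
      have "\<tau> \<le> r" "t m \<le> r" using tnn[of 0] tnn[of m] real by (auto simp: \<tau>_def)
      then have "Q \<le> M * r" "P \<le> M * r" using M0 by (auto simp: P_def Q_def)
      moreover have "Q = 1/4 + P/2 \<or> Q = M * r" using linT QLe real by (auto simp: Q_def)
      moreover have "P < M * r \<longrightarrow> x m \<le> P"
      proof
        assume "P < M * r" then have "t m < r" using M0 by (simp add: P_def)
        then show "x m \<le> P" using c1 real by (simp add: P_def)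
      qed
      ultimately show ?thesis using that by blast
    next
      case PInf
      then have "Q = 1/4 + P/2" using linT QLe by auto
      moreover have "x m \<le> P" using c1 PInf by (simp add: P_def)
      ultimately show ?thesis using that[of "max P Q + 1"] by auto
    next
      case MInf then show ?thesis using c0 by simp
    qed
    have "P = Q" by (rule fin_arith[OF xmPQ xm QL R(3) R(1) R(2) R(4) c2' P0])
    then have "t m = \<tau>" using M0 by (simp add: P_def Q_def)
    then show ?thesis using teq by (auto simp: less_Suc_eq)
  qed
qed



lemma costf:
  assumes m: "m \<ge> 1" and f: "feasible (Suc m) y"
  shows "cost (Suc m) (ex_lat (Suc m)) y = (\<Sum>i<m. (y i - 1 / (4 * real m))^2) + 7 / (16 * real m)"
proof -
  define a where "a = 1 / (2 * real m)"
  have Ma: "real m * a = 1/2" using m by (simp add: a_def)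
  have ym: "y m = 1 - (\<Sum>i<m. y i)" using f by (simp add: feasible_def)
  have c: "cost (Suc m) (ex_lat (Suc m)) y = (\<Sum>i<m. y i * y i) + a * y m"
    by (simp add: cost_def a_def)
  have "(\<Sum>i<m. (y i - a/2)^2) = (\<Sum>i<m. y i * y i - a * y i + a*a/4)"
    by (rule sum.cong) (auto simp: power2_eq_square algebra_simps)
  also have "\<dots> = (\<Sum>i<m. y i * y i) - a * (\<Sum>i<m. y i) + real m * a * a / 4"
    by (simp add: sum.distrib sum_subtractf sum_distrib_left)
  finally have sq: "(\<Sum>i<m. (y i - a/2)^2) = (\<Sum>i<m. y i * y i) - a * (\<Sum>i<m. y i) + a / 8"
    using Ma by simp
  have h1: "a / 2 = 1 / (4 * real m)" and h2: "7/8 * a = 7 / (16 * real m)" by (simp_all add: a_def)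
  have "a * y m = a - a * (\<Sum>i<m. y i)" unfolding ym by (simp add: right_diff_distrib)
  then have "cost (Suc m) (ex_lat (Suc m)) y = (\<Sum>i<m. (y i - a/2)^2) + 7/8 * a"
    using c sq by linarith
  then show ?thesis unfolding h1 h2 .
qed

lemma opt_char:
  assumes m: "m \<ge> 1"
  shows "optimal (Suc m) (ex_lat (Suc m)) y \<longleftrightarrow>
     y = (\<lambda>i. if i < m then 1 / (4 * real m) else if i = m then 3/4 else 0)"
     (is "_ \<longleftrightarrow> y = ?xs")
proof -
  have fxs: "feasible (Suc m) ?xs" using m by (simp add: feasible_def)
  have cxs: "cost (Suc m) (ex_lat (Suc m)) ?xs = 7 / (16 * real m)"
    using costf[OF m fxs] by simp
  have lb: "cost (Suc m) (ex_lat (Suc m)) z \<ge> 7 / (16 * real m)" if "feasible (Suc m) z" for z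
    using costf[OF m that] by (simp add: sum_nonneg)
  show ?thesis
  proof
    assume o: "optimal (Suc m) (ex_lat (Suc m)) y"
    then have fy: "feasible (Suc m) y" and "cost (Suc m) (ex_lat (Suc m)) y \<le> 7 / (16 * real m)"
      using fxs cxs by (auto simp: optimal_def)
    then have "(\<Sum>i<m. (y i - 1 / (4 * real m))^2) \<le> 0" using costf[OF m fy] by simp
    then have "(\<Sum>i<m. (y i - 1 / (4 * real m))^2) = 0" by (meson antisym sum_nonneg zero_le_power2)
    then have e: "\<forall>i<m. y i = 1 / (4 * real m)" by (simp add: sum_nonneg_eq_0_iff)
    have "y m = 1 - (\<Sum>i<m. y i)" using fy by (simp add: feasible_def)
    also have "(\<Sum>i<m. y i) = 1/4" using e m by simp
    finally have "y m = 3/4" by simp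
    then show "y = ?xs" using e fy by (auto simp: feasible_def intro!: ext)
  next
    assume "y = ?xs"
    then show "optimal (Suc m) (ex_lat (Suc m)) y" using fxs cxs lb by (simp add: optimal_def)
  qed
qed



theorem mainTheorem14:
  fixes n :: nat
  assumes "n \<ge> 2"
  shows "(\<forall>c::ereal. c \<ge> 0 \<longrightarrow> (\<forall>t \<in> toll_eq n (ex_lat n) c.
            eqflow n (ex_lat n) t = eqflow n (ex_lat n) (\<lambda>_. 0)))
       \<and> eqflow n (ex_lat n) (\<lambda>_. 0) =
           (\<lambda>i. if i < n - 1 then 1 / (2 * (real n - 1)) else if i = n - 1 then 1/2 else 0)
       \<and> (\<forall>y. optimal n (ex_lat n) y \<longleftrightarrow>
           y = (\<lambda>i. if i < n - 1 then 1 / (4 * (real n - 1)) else if i = n - 1 then 3/4 else 0))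
       \<and> (\<Union>c\<in>{c::ereal. c \<ge> 0}. {cost n (ex_lat n) (eqflow n (ex_lat n) t)
              / cost n (ex_lat n) (\<lambda>i. if i < n - 1 then 1 / (4 * (real n - 1)) else if i = n - 1 then 3/4 else 0)
              | t. t \<in> toll_eq n (ex_lat n) c}) = {8/7}"
proof -
  obtain m where n: "n = Suc m" and m: "m \<ge> 1" using assms by (cases n) auto
  define x0 where "x0 = (\<lambda>i. if i < m then 1 / (2 * real m) else if i = m then 1/2 else (0::real))"
  define xs where "xs = (\<lambda>i. if i < m then 1 / (4 * real m) else if i = m then 3/4 else (0::real))"
  have e0: "(\<lambda>i. if i < n - 1 then 1 / (2 * (real n - 1)) else if i = n - 1 then 1/2 else 0) = x0"
    unfolding n x0_def by (rule ext) simp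
  have es: "(\<lambda>i. if i < n - 1 then 1 / (4 * (real n - 1)) else if i = n - 1 then 3/4 else 0) = xs"
    unfolding n xs_def by (rule ext) simp
  have X0: "eqflow (Suc m) (ex_lat (Suc m)) (\<lambda>_. 0) = x0"
    using const_toll[OF m, of "\<lambda>_. 0" 0] unfolding x0_def by simp
  have P1: "eqflow (Suc m) (ex_lat (Suc m)) t = x0"
    if "c \<ge> 0" "t \<in> toll_eq (Suc m) (ex_lat (Suc m)) c" for c t
    unfolding x0_def by (rule const_toll[OF m eq_tolls[OF m that]])
  have fx0: "feasible (Suc m) x0" using m by (simp add: feasible_def x0_def)
  have cx0: "cost (Suc m) (ex_lat (Suc m)) x0 = 1 / (2 * real m)"
  proof -
    have "(\<Sum>i<m. (x0 i - 1 / (4 * real m))^2) = real m * (1 / (4 * real m))^2"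
      by (simp add: x0_def)
    also have "\<dots> = 1 / (16 * real m)" using m by (simp add: power2_eq_square)
    finally show ?thesis using costf[OF m fx0] by simp
  qed
  have fxs: "feasible (Suc m) xs" using m by (simp add: feasible_def xs_def)
  have cxs: "cost (Suc m) (ex_lat (Suc m)) xs = 7 / (16 * real m)"
    using costf[OF m fxs] by (simp add: xs_def)
  have ratio: "cost (Suc m) (ex_lat (Suc m)) x0 / cost (Suc m) (ex_lat (Suc m)) xs = 8/7"
    unfolding cx0 cxs using m by (simp add: field_simps)
  have z: "(\<lambda>_. 0) \<in> toll_eq (Suc m) (ex_lat (Suc m)) 0"
  proof -
    have "(\<lambda>_. 0::real)(i := u) = (\<lambda>_. 0)" if "0 \<le> u" "ereal u \<le> 0" for i u
      using that by (auto simp: zero_ereal_def)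
    then show ?thesis by (auto simp: toll_eq_def zero_ereal_def profit_def)
  qed
  have S: "(\<Union>c\<in>{c::ereal. c \<ge> 0}. {cost (Suc m) (ex_lat (Suc m)) (eqflow (Suc m) (ex_lat (Suc m)) t)
              / cost (Suc m) (ex_lat (Suc m)) xs | t. t \<in> toll_eq (Suc m) (ex_lat (Suc m)) c}) = {8/7}"
  proof
    show "{8/7} \<subseteq> (\<Union>c\<in>{c::ereal. c \<ge> 0}. {cost (Suc m) (ex_lat (Suc m)) (eqflow (Suc m) (ex_lat (Suc m)) t)
              / cost (Suc m) (ex_lat (Suc m)) xs | t. t \<in> toll_eq (Suc m) (ex_lat (Suc m)) c})"
    proof
      fix r assume "r \<in> {8/7::real}"
      then have "r = cost (Suc m) (ex_lat (Suc m)) (eqflow (Suc m) (ex_lat (Suc m)) (\<lambda>_. 0))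
              / cost (Suc m) (ex_lat (Suc m)) xs" unfolding X0 ratio using \<open>r \<in> {8/7::real}\<close> by simp
      then have "r \<in> {cost (Suc m) (ex_lat (Suc m)) (eqflow (Suc m) (ex_lat (Suc m)) t)
              / cost (Suc m) (ex_lat (Suc m)) xs | t. t \<in> toll_eq (Suc m) (ex_lat (Suc m)) 0}"
        using z by blast
      then show "r \<in> (\<Union>c\<in>{c::ereal. c \<ge> 0}. {cost (Suc m) (ex_lat (Suc m)) (eqflow (Suc m) (ex_lat (Suc m)) t)
              / cost (Suc m) (ex_lat (Suc m)) xs | t. t \<in> toll_eq (Suc m) (ex_lat (Suc m)) c})"
        by blast
    qed
  next
    show "(\<Union>c\<in>{c::ereal. c \<ge> 0}. {cost (Suc m) (ex_lat (Suc m)) (eqflow (Suc m) (ex_lat (Suc m)) t)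
              / cost (Suc m) (ex_lat (Suc m)) xs | t. t \<in> toll_eq (Suc m) (ex_lat (Suc m)) c}) \<subseteq> {8/7}"
    proof
      fix r assume "r \<in> (\<Union>c\<in>{c::ereal. c \<ge> 0}. {cost (Suc m) (ex_lat (Suc m)) (eqflow (Suc m) (ex_lat (Suc m)) t)
              / cost (Suc m) (ex_lat (Suc m)) xs | t. t \<in> toll_eq (Suc m) (ex_lat (Suc m)) c})"
      then obtain c t where ct: "c \<ge> 0" "t \<in> toll_eq (Suc m) (ex_lat (Suc m)) c"
        and r: "r = cost (Suc m) (ex_lat (Suc m)) (eqflow (Suc m) (ex_lat (Suc m)) t)
              / cost (Suc m) (ex_lat (Suc m)) xs" by blast
      show "r \<in> {8/7}" using r P1[OF ct] ratio by simp
    qed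
  qed
  have O: "\<forall>y. optimal n (ex_lat n) y \<longleftrightarrow> y = xs"
    using opt_char[OF m] unfolding n xs_def by blast
  have A1: "\<forall>c::ereal. c \<ge> 0 \<longrightarrow> (\<forall>t \<in> toll_eq n (ex_lat n) c.
            eqflow n (ex_lat n) t = eqflow n (ex_lat n) (\<lambda>_. 0))"
    unfolding n using P1 X0 by simp
  show ?thesis unfolding e0 es
    using A1 O S X0 unfolding n by blast
qed


end
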